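(* Let $X\subset\mathbb{R}^n$ be a nonempty compact convex set with diameter $D_X:=\max_{x,y\in X}\|x-y\|$ (Euclidean norm). Let $u\in X$, $g\in\mathbb{R}^n$, $\beta>0$, $\eta>0$, and let $\phi(x):=\langle g,x\rangle+\frac{\beta}{2}\|x-u\|^2$. Consider the ACGM procedure described in the context, with tolerances $\delta^t\ge 0$. Let $\{\lambda^t\}_{t\ge1}\subset[0,1]$ be any predetermined sequence with $\lambda^1=1$, and define $\Lambda^1:=1$ and $\Lambda^t:=\Lambda^{t-1}(1-\lambda^t)$ for $t>1$. Suppose the step sizes $\alpha^t$ of the procedure are chosen so that $$\phi(u^t)\le \phi\big((1-\lambda^t)u^{t-1}+\lambda^t v^t\big)\quad\text{for all } t\ge 1 .$$ Then for all $t\ge 2$ (for which the iterates $u^1,\dots,u^t$ have been generated), $$\sum_{j=2}^t \frac{\lambda^j}{\Lambda^j}\max_{x\in X}\langle\nabla\phi(u^{j-1}),u^{j-1}-x\rangle \le \Big[\delta^1+\sum_{j=2}^t\frac{\lambda^j}{\Lambda^j}\Big(\delta^j+\Lambda^{j-1}\sum_{i=1}^{j-1}\frac{\lambda^i}{\Lambda^i}\delta^i\Big)\Big] + \frac{\beta D_X^2}{2}\Big[1+\sum_{j=2}^t\frac{\lambda^j}{\Lambda^j}\Big(\lambda^j+\Lambda^{j-1}\sum_{i=1}^{j-1}\frac{(\lambda^i)^2}{\Lambda^i}\Big)\Big].$$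
   Context: Note $\nabla\phi(x)=g+\beta(x-u)$. ACGM (approximate conditional gradient method) procedure for $\min_{x\in X}\phi(x)$, with input $u,g,\beta,\eta$ and a sequence of tolerances $\delta^t\ge0$: set $u^0:=u$. For $t=1,2,\dots$: compute $v^t\in X$ such that $\langle\nabla\phi(u^{t-1}),v^t-x\rangle\le\delta^t$ for all $x\in X$ (an approximate solution of the linear subproblem $\min_{x\in X}\langle\nabla\phi(u^{t-1}),x\rangle$). If $\langle\nabla\phi(u^{t-1}),u^{t-1}-v^t\rangle\le\eta-\delta^t$, stop and output $u^+:=u^{t-1}$. Otherwise set $u^t:=(1-\alpha^t)u^{t-1}+\alpha^t v^t$ with some step size $\alpha^t\in[0,1]$, and continue. *)

theory Defs
  imports "HOL-Analysis.Analysis"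
begin

definition phi :: "'a::euclidean_space \<Rightarrow> 'a \<Rightarrow> real \<Rightarrow> 'a \<Rightarrow> real" where
  "phi g u \<beta> x = inner g x + \<beta> / 2 * (norm (x - u))\<^sup>2"

definition grad_phi :: "'a::euclidean_space \<Rightarrow> 'a \<Rightarrow> real \<Rightarrow> 'a \<Rightarrow> 'a" where
  "grad_phi g u \<beta> x = g + \<beta> *\<^sub>R (x - u)"

text \<open>Lambda^1 = 1, Lambda^t = Lambda^(t-1) (1 - lambda^t) for t > 1
  (the value at index 0 is irrelevant and set to 1).\<close>
fun Lam :: "(nat \<Rightarrow> real) \<Rightarrow> nat \<Rightarrow> real" where
  "Lam lam 0 = 1"
| "Lam lam (Suc 0) = 1"
| "Lam lam (Suc (Suc t)) = Lam lam (Suc t) * (1 - lam (Suc (Suc t)))"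

text \<open>One run of ACGM producing iterates u^0,...,u^T (none of the first T
  stopping tests fired), with u^0 = u.\<close>
definition acgm_run ::
  "'a::euclidean_space set \<Rightarrow> 'a \<Rightarrow> 'a \<Rightarrow> real \<Rightarrow> real \<Rightarrow> (nat \<Rightarrow> real)
   \<Rightarrow> (nat \<Rightarrow> 'a) \<Rightarrow> (nat \<Rightarrow> 'a) \<Rightarrow> (nat \<Rightarrow> real) \<Rightarrow> nat \<Rightarrow> bool" where
  "acgm_run X u g \<beta> \<eta> \<delta> us vs \<alpha> T \<longleftrightarrow>
     us 0 = u \<and>
     (\<forall>t\<in>{1..T}.
        vs t \<in> X \<and>
        (\<forall>x\<in>X. inner (grad_phi g u \<beta> (us (t - 1))) (vs t - x) \<le> \<delta> t) \<and>
        \<not> (inner (grad_phi g u \<beta> (us (t - 1))) (us (t - 1) - vs t) \<le> \<eta> - \<delta> t) \<and>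
        \<alpha> t \<in> {0..1} \<and>
        us t = (1 - \<alpha> t) *\<^sub>R us (t - 1) + \<alpha> t *\<^sub>R vs t)"

end

theory Submission
  imports Defs
begin

lemma Lam_Suc: "m \<ge> 1 \<Longrightarrow> Lam lam (Suc m) = Lam lam m * (1 - lam (Suc m))"
  by (cases m) auto

lemma Lam_pos: assumes "\<forall>t\<in>{2..T}. lam t < 1" "1 \<le> j" "j \<le> T"
  shows "Lam lam j > 0"
  using assms(2,3)
proof (induction j)
  case 0 then show ?case by simp
next
  case (Suc m)
  show ?case
  proof (cases "m = 0")
    case True then show ?thesis by simp
  next
    case False
    then have "Lam lam m > 0" using Suc by simp
    moreover have "lam (Suc m) < 1" using assms(1) Suc.prems False by auto
    ultimately show ?thesis using Lam_Suc[of m lam] False by simp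
  qed
qed

lemma alg1: fixes L0 l x d K :: real assumes "L0 > 0" "l < 1"
  shows "((1 - l) * x + l * d + K * l\<^sup>2) / (L0 * (1 - l)) = x / L0 + l / (L0 * (1 - l)) * d + K * (l\<^sup>2 / (L0 * (1 - l)))"
proof -
  define q where "q = 1 - l"
  have q: "q > 0" using assms q_def by simp
  have "l = 1 - q" using q_def by simp
  then show ?thesis using q assms unfolding q_def[symmetric] by (simp add: field_simps)
qed
lemma alg2: fixes L0 l c d K f0 f1 F :: real assumes "L0 > 0" "l < 1"
  and a: "f1 + c * l \<le> f0 + K * (l * l)"
  shows "l / (L0 * (1 - l)) * (c + d) + (f1 - F) / (L0 * (1 - l)) - (f0 - F) / L0
         \<le> l / (L0 * (1 - l)) * (d + K * l + L0 * ((f0 - F) / L0))"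
proof -
  define q where "q = 1 - l"
  have q: "q > 0" using assms q_def by simp
  have L: "l = 1 - q" using q_def by simp
  have "l * (c + d) + (f1 - F) - (f0 - F) * q \<le> l * (d + K * l + (f0 - F))"
    using a unfolding L by (simp add: algebra_simps)
  then have "(l * (c + d) + (f1 - F) - (f0 - F) * q) / (L0 * q) \<le> l * (d + K * l + (f0 - F)) / (L0 * q)"
    using q assms by (simp add: divide_right_mono)
  moreover have "l / (L0 * q) * (c + d) + (f1 - F) / (L0 * q) - (f0 - F) / L0 = (l * (c + d) + (f1 - F) - (f0 - F) * q) / (L0 * q)"
    using q assms by (simp add: field_simps)
  moreover have "l / (L0 * q) * (d + K * l + L0 * ((f0 - F) / L0)) = l * (d + K * l + (f0 - F)) / (L0 * q)"
    using q assms by (simp add: field_simps)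
  ultimately show ?thesis unfolding q_def by simp
qed

lemma abstract:
  fixes f c d lam :: "nat \<Rightarrow> real" and K :: real and T :: nat
  assumes pos: "\<And>j. 1 \<le> j \<Longrightarrow> j \<le> T \<Longrightarrow> Lam lam j > 0"
    and dn: "\<And>j. 1 \<le> j \<Longrightarrow> d j \<ge> 0"
    and lr: "\<And>j. 1 \<le> j \<Longrightarrow> lam j \<ge> 0"
    and l1: "lam 1 = 1" and K: "K \<ge> 0"
    and st: "\<And>j. 1 \<le> j \<Longrightarrow> j \<le> T \<Longrightarrow> f j \<le> f (j - 1) - lam j * c j + K * (lam j)\<^sup>2"
    and gp: "\<And>j. 1 \<le> j \<Longrightarrow> j \<le> T \<Longrightarrow> f (j - 1) - f T \<le> c j + d j"
    and T: "T \<ge> 1"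
  shows "(\<Sum>j=2..T. lam j / Lam lam j * (c j + d j))
     \<le> (d 1 + (\<Sum>j=2..T. lam j / Lam lam j *
                 (d j + Lam lam (j - 1) * (\<Sum>i=1..j-1. lam i / Lam lam i * d i))))
           + K *
             (1 + (\<Sum>j=2..T. lam j / Lam lam j *
                 (lam j + Lam lam (j - 1) * (\<Sum>i=1..j-1. (lam i)\<^sup>2 / Lam lam i))))"
proof -
  define F where "F = f T"
  define S where "S m = (\<Sum>i=1..m. lam i / Lam lam i * d i) + K * (\<Sum>i=1..m. (lam i)\<^sup>2 / Lam lam i)" for m
  have h1: "f 1 - F \<le> d 1 + K"
    using st[of 1] gp[of 1] T l1 by (simp add: F_def)
  have hS: "(f m - F) / Lam lam m \<le> S m" if "1 \<le> m" "m \<le> T" for m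
    using that
  proof (induction m)
    case 0 then show ?case by simp
  next
    case (Suc m)
    show ?case
    proof (cases "m = 0")
      case True then show ?thesis using h1 l1 by (simp add: S_def)
    next
      case False
      have m1: "1 \<le> m" using False by simp
      have IH: "(f m - F) / Lam lam m \<le> S m" using Suc False by simp
      have Lp: "Lam lam m > 0" "Lam lam (Suc m) > 0" using pos Suc.prems m1 by auto
      have LS: "Lam lam (Suc m) = Lam lam m * (1 - lam (Suc m))" using Lam_Suc m1 by blast
      have a: "f (Suc m) \<le> f m - lam (Suc m) * c (Suc m) + K * (lam (Suc m))\<^sup>2"
        using st[of "Suc m"] Suc.prems by simp
      have b: "f m - F \<le> c (Suc m) + d (Suc m)" using gp[of "Suc m"] Suc.prems by (simp add: F_def)
      have c: "f (Suc m) - F \<le> (1 - lam (Suc m)) * (f m - F) + lam (Suc m) * d (Suc m) + K * (lam (Suc m))\<^sup>2"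
      proof -
        have "lam (Suc m) * ((f m - F) - d (Suc m)) \<le> lam (Suc m) * c (Suc m)"
          using b lr[of "Suc m"] by (intro mult_left_mono) auto
        then show ?thesis using a by (simp add: algebra_simps)
      qed
      have "(f (Suc m) - F) / Lam lam (Suc m) \<le> ((1 - lam (Suc m)) * (f m - F) + lam (Suc m) * d (Suc m) + K * (lam (Suc m))\<^sup>2) / Lam lam (Suc m)"
        using c Lp by (simp add: divide_right_mono)
      also have "\<dots> = (f m - F) / Lam lam m + lam (Suc m) / Lam lam (Suc m) * d (Suc m) + K * ((lam (Suc m))\<^sup>2 / Lam lam (Suc m))"
        unfolding LS using Lp LS alg1[of "Lam lam m" "lam (Suc m)"] by (simp add: zero_less_mult_iff)
      also have "\<dots> \<le> S m + lam (Suc m) / Lam lam (Suc m) * d (Suc m) + K * ((lam (Suc m))\<^sup>2 / Lam lam (Suc m))"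
        using IH by simp
      also have "\<dots> = S (Suc m)" by (simp add: S_def algebra_simps)
      finally show ?thesis .
    qed
  qed
  define R where "R m = d 1 + K + (\<Sum>j=2..m. lam j / Lam lam j * (d j + K * lam j + Lam lam (j - 1) * S (j - 1)))" for m
  have main: "(\<Sum>j=2..m. lam j / Lam lam j * (c j + d j)) + (f m - F) / Lam lam m \<le> R m"
    if "1 \<le> m" "m \<le> T" for m
    using that
  proof (induction m)
    case 0 then show ?case by simp
  next
    case (Suc m)
    show ?case
    proof (cases "m = 0")
      case True then show ?thesis using h1 by (simp add: R_def)
    next
      case False
      have m1: "1 \<le> m" using False by simp
      have IH: "(\<Sum>j=2..m. lam j / Lam lam j * (c j + d j)) + (f m - F) / Lam lam m \<le> R m" using Suc False by simp
      have Lp: "Lam lam m > 0" "Lam lam (Suc m) > 0" using pos Suc.prems m1 by auto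
      have LS: "Lam lam (Suc m) = Lam lam m * (1 - lam (Suc m))" using Lam_Suc m1 by blast
      have a: "f (Suc m) \<le> f m - lam (Suc m) * c (Suc m) + K * (lam (Suc m))\<^sup>2"
        using st[of "Suc m"] Suc.prems by simp
      have hs: "(f m - F) / Lam lam m \<le> S m" using hS m1 Suc.prems by simp
      have lnn: "lam (Suc m) / Lam lam (Suc m) \<ge> 0" using lr[of "Suc m"] Lp by simp
      have key: "lam (Suc m) / Lam lam (Suc m) * (c (Suc m) + d (Suc m)) + (f (Suc m) - F) / Lam lam (Suc m) - (f m - F) / Lam lam m
         \<le> lam (Suc m) / Lam lam (Suc m) * (d (Suc m) + K * lam (Suc m) + Lam lam m * ((f m - F) / Lam lam m))"
      proof -
        have "f (Suc m) + c (Suc m) * lam (Suc m) \<le> f m + K * (lam (Suc m) * lam (Suc m))"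
          using a by (simp add: algebra_simps power2_eq_square)
        then show ?thesis unfolding LS using alg2[of "Lam lam m" "lam (Suc m)"] Lp LS by (simp add: zero_less_mult_iff)
      qed
      have key2: "lam (Suc m) / Lam lam (Suc m) * (d (Suc m) + K * lam (Suc m) + Lam lam m * ((f m - F) / Lam lam m))
          \<le> lam (Suc m) / Lam lam (Suc m) * (d (Suc m) + K * lam (Suc m) + Lam lam m * S m)"
      proof -
        have "Lam lam m * ((f m - F) / Lam lam m) \<le> Lam lam m * S m"
          using hs Lp by (intro mult_left_mono) auto
        then show ?thesis using lnn by (intro mult_left_mono) auto
      qed
      have eR: "R (Suc m) = R m + lam (Suc m) / Lam lam (Suc m) * (d (Suc m) + K * lam (Suc m) + Lam lam m * S m)"
        using m1 by (simp add: R_def)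
      have eL: "(\<Sum>j=2..Suc m. lam j / Lam lam j * (c j + d j)) = (\<Sum>j=2..m. lam j / Lam lam j * (c j + d j)) + lam (Suc m) / Lam lam (Suc m) * (c (Suc m) + d (Suc m))"
        using m1 by simp
      show ?thesis using IH key key2 eR eL by linarith
    qed
  qed
  have "(\<Sum>j=2..T. lam j / Lam lam j * (c j + d j)) \<le> R T" using main[of T] T by (simp add: F_def)
  also have "R T = (d 1 + (\<Sum>j=2..T. lam j / Lam lam j *
                 (d j + Lam lam (j - 1) * (\<Sum>i=1..j-1. lam i / Lam lam i * d i))))
           + K *
             (1 + (\<Sum>j=2..T. lam j / Lam lam j *
                 (lam j + Lam lam (j - 1) * (\<Sum>i=1..j-1. (lam i)\<^sup>2 / Lam lam i))))"
    by (simp add: R_def S_def sum_distrib_left sum.distrib[symmetric] algebra_simps)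
  finally show ?thesis .
qed


lemma phi_expand: "phi g u b y = phi g u b x + inner (grad_phi g u b x) (y - x) + b / 2 * (norm (y - x))\<^sup>2"
proof -
  have e: "y - u = (x - u) + (y - x)" by simp
  have E: "(norm (y - u))\<^sup>2 = (norm (x - u))\<^sup>2 + 2 * inner (x - u) (y - x) + (norm (y - x))\<^sup>2"
    unfolding e by (simp add: power2_norm_eq_inner inner_simps inner_commute)
  have "b / 2 * (norm (y - u))\<^sup>2 = b / 2 * ((norm (x - u))\<^sup>2 + 2 * inner (x - u) (y - x) + (norm (y - x))\<^sup>2)"
    by (simp only: E)
  also have "\<dots> = b / 2 * (norm (x - u))\<^sup>2 + inner (b *\<^sub>R (x - u)) (y - x) + b / 2 * (norm (y - x))\<^sup>2"
    by (simp only: inner_scaleR_left algebra_simps) simp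
  finally have "b / 2 * (norm (y - u))\<^sup>2 = b / 2 * (norm (x - u))\<^sup>2 + inner (b *\<^sub>R (x - u)) (y - x) + b / 2 * (norm (y - x))\<^sup>2" .
  then show ?thesis unfolding phi_def grad_phi_def by (simp add: inner_add_left inner_diff_right)
qed

theorem mainTheorem1:
  fixes X :: "(real ^ 'n) set" and u g :: "real ^ 'n"
    and \<beta> \<eta> :: real and \<delta> lam \<alpha> :: "nat \<Rightarrow> real"
    and us vs :: "nat \<Rightarrow> real ^ 'n" and T :: nat
  assumes "compact X" "convex X" "X \<noteq> {}"
    and "u \<in> X" and "\<beta> > 0" and "\<eta> > 0"
    and "\<forall>t\<ge>1. \<delta> t \<ge> 0"
    and "\<forall>t\<ge>1. lam t \<in> {0..1}" and "lam 1 = 1"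
    and "\<forall>t\<in>{2..T}. lam t < 1"
    and "acgm_run X u g \<beta> \<eta> \<delta> us vs \<alpha> T"
    and "\<forall>t\<in>{1..T}. phi g u \<beta> (us t)
            \<le> phi g u \<beta> ((1 - lam t) *\<^sub>R us (t - 1) + lam t *\<^sub>R vs t)"
    and "T \<ge> 2"
  shows "(\<Sum>j=2..T. lam j / Lam lam j *
            (SUP x\<in>X. inner (grad_phi g u \<beta> (us (j - 1))) (us (j - 1) - x)))
         \<le> (\<delta> 1 + (\<Sum>j=2..T. lam j / Lam lam j *
                 (\<delta> j + Lam lam (j - 1) * (\<Sum>i=1..j-1. lam i / Lam lam i * \<delta> i))))
           + \<beta> * (diameter X)\<^sup>2 / 2 *
             (1 + (\<Sum>j=2..T. lam j / Lam lam j *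
                 (lam j + Lam lam (j - 1) * (\<Sum>i=1..j-1. (lam i)\<^sup>2 / Lam lam i))))"
proof -
  note run = assms(11)[unfolded acgm_run_def]
  define G where "G j = grad_phi g u \<beta> (us (j - 1))" for j
  define c where "c j = inner (G j) (us (j - 1) - vs j)" for j
  define f where "f j = phi g u \<beta> (us j)" for j
  define K where "K = \<beta> * (diameter X)\<^sup>2 / 2"
  have bX: "bounded X" using assms(1) compact_imp_bounded by blast
  have usX: "us j \<in> X" if "j \<le> T" for j
    using that
  proof (induction j)
    case 0 then show ?case using run assms(4) by simp
  next
    case (Suc m)
    have r: "vs (Suc m) \<in> X" "\<alpha> (Suc m) \<in> {0..1}"
       "us (Suc m) = (1 - \<alpha> (Suc m)) *\<^sub>R us m + \<alpha> (Suc m) *\<^sub>R vs (Suc m)"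
      using run Suc.prems by auto
    have "us m \<in> X" using Suc by simp
    then show ?case using r assms(2) by (simp add: convexD)
  qed
  have vsX: "vs j \<in> X" if "1 \<le> j" "j \<le> T" for j using run that by auto
  have vsd: "inner (G j) (vs j - x) \<le> \<delta> j" if "1 \<le> j" "j \<le> T" "x \<in> X" for j x
    using run that unfolding G_def by auto
  have st: "f j \<le> f (j - 1) - lam j * c j + K * (lam j)\<^sup>2" if j: "1 \<le> j" "j \<le> T" for j
  proof -
    have "f j \<le> phi g u \<beta> ((1 - lam j) *\<^sub>R us (j - 1) + lam j *\<^sub>R vs j)"
      using assms(12) j unfolding f_def by auto
    also have "(1 - lam j) *\<^sub>R us (j - 1) + lam j *\<^sub>R vs j = us (j - 1) + lam j *\<^sub>R (vs j - us (j - 1))"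
      by (simp add: algebra_simps)
    also have "phi g u \<beta> (us (j - 1) + lam j *\<^sub>R (vs j - us (j - 1)))
       = f (j - 1) + lam j * inner (G j) (vs j - us (j - 1)) + \<beta> / 2 * (lam j)\<^sup>2 * (norm (vs j - us (j - 1)))\<^sup>2"
      using phi_expand[of g u \<beta> "us (j - 1) + lam j *\<^sub>R (vs j - us (j - 1))" "us (j - 1)"]
      unfolding f_def G_def by (simp add: inner_simps power_mult_distrib abs_mult)
    also have "lam j * inner (G j) (vs j - us (j - 1)) = - lam j * c j"
      unfolding c_def by (simp add: inner_diff_right algebra_simps)
    also have "\<beta> / 2 * (lam j)\<^sup>2 * (norm (vs j - us (j - 1)))\<^sup>2 \<le> K * (lam j)\<^sup>2"
    proof -
      have "norm (vs j - us (j - 1)) \<le> diameter X"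
        using diameter_bounded_bound[OF bX vsX[OF j] usX[of "j - 1"]] j by (simp add: dist_norm)
      then have "(norm (vs j - us (j - 1)))\<^sup>2 \<le> (diameter X)\<^sup>2"
        by (intro power_mono) auto
      then have "\<beta> / 2 * (lam j)\<^sup>2 * (norm (vs j - us (j - 1)))\<^sup>2 \<le> \<beta> / 2 * (lam j)\<^sup>2 * (diameter X)\<^sup>2"
        using assms(5) by (intro mult_left_mono) auto
      then show ?thesis unfolding K_def by (simp add: algebra_simps)
    qed
    finally show ?thesis by simp
  qed
  have gp: "f (j - 1) - f T \<le> c j + \<delta> j" if j: "1 \<le> j" "j \<le> T" for j
  proof -
    have "f T = f (j - 1) + inner (G j) (us T - us (j - 1)) + \<beta> / 2 * (norm (us T - us (j - 1)))\<^sup>2"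
      unfolding f_def G_def by (rule phi_expand)
    then have "f (j - 1) - f T \<le> inner (G j) (us (j - 1) - us T)"
      using assms(5) by (simp add: inner_simps)
    also have "inner (G j) (us (j - 1) - us T) = c j + inner (G j) (vs j - us T)"
      unfolding c_def by (simp add: inner_simps)
    also have "\<dots> \<le> c j + \<delta> j" using vsd[OF j usX[of T]] by simp
    finally show ?thesis .
  qed
  have pos: "\<And>j. 1 \<le> j \<Longrightarrow> j \<le> T \<Longrightarrow> Lam lam j > 0"
    using Lam_pos[OF assms(10)] by blast
  have A: "(\<Sum>j=2..T. lam j / Lam lam j * (c j + \<delta> j))
     \<le> (\<delta> 1 + (\<Sum>j=2..T. lam j / Lam lam j *
                 (\<delta> j + Lam lam (j - 1) * (\<Sum>i=1..j-1. lam i / Lam lam i * \<delta> i))))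
           + K *
             (1 + (\<Sum>j=2..T. lam j / Lam lam j *
                 (lam j + Lam lam (j - 1) * (\<Sum>i=1..j-1. (lam i)\<^sup>2 / Lam lam i))))"
    using abstract[of T lam \<delta> K f c] pos assms(7,8,9,5,13) st gp unfolding K_def by auto
  have "(\<Sum>j=2..T. lam j / Lam lam j *
            (SUP x\<in>X. inner (grad_phi g u \<beta> (us (j - 1))) (us (j - 1) - x)))
       \<le> (\<Sum>j=2..T. lam j / Lam lam j * (c j + \<delta> j))"
  proof (rule sum_mono)
    fix j assume "j \<in> {2..T}"
    then have j: "1 \<le> j" "j \<le> T" "2 \<le> j" by auto
    have "(SUP x\<in>X. inner (grad_phi g u \<beta> (us (j - 1))) (us (j - 1) - x)) \<le> c j + \<delta> j"
    proof (rule cSUP_least[OF assms(3)])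
      fix x assume x: "x \<in> X"
      have "inner (G j) (us (j - 1) - x) = c j + inner (G j) (vs j - x)"
        unfolding c_def by (simp add: inner_simps)
      also have "\<dots> \<le> c j + \<delta> j" using vsd[OF j(1,2) x] by simp
      finally show "inner (grad_phi g u \<beta> (us (j - 1))) (us (j - 1) - x) \<le> c j + \<delta> j"
        unfolding G_def .
    qed
    moreover have "lam j / Lam lam j \<ge> 0" using pos[OF j(1,2)] assms(8) j by auto
    ultimately show "lam j / Lam lam j * (SUP x\<in>X. inner (grad_phi g u \<beta> (us (j - 1))) (us (j - 1) - x))
        \<le> lam j / Lam lam j * (c j + \<delta> j)" by (rule mult_left_mono)
  qed
  then show ?thesis using A unfolding K_def by linarith
qed

end
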